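(* Let $\mathfrak l$ be a real nilpotent Lie algebra with $\dim\mathfrak l=5$ and let $\mathfrak a=0$. If $\mathcal H^2_Q(\mathfrak l,\mathfrak a)_0\neq\emptyset$, then $\mathfrak l\cong\mathbb R^5$ or $\mathfrak l\cong\mathfrak g_{5,2}$.
   Context: $\mathfrak g_{5,2}$ has basis $X_1,X_2,X_3,Y,Z$ with $[X_1,X_2]=Y$, $[X_1,X_3]=Z$, other brackets of basis vectors zero; $\mathbb R^5$ is abelian. For a Lie algebra $\mathfrak l$: $\mathfrak l^1=\mathfrak l$, $\mathfrak l^{k+1}=[\mathfrak l,\mathfrak l^k]$, $\mathfrak z(\mathfrak l)$ the centre. For a pseudo-Euclidean space $\mathfrak a$ regarded as trivial $\mathfrak l$-module: $C^p(\mathfrak l,\mathfrak a)$ alternating $p$-linear maps with Chevalley–Eilenberg differential $d$, $C^p(\mathfrak l)=C^p(\mathfrak l,\mathbb R)$, $\langle\alpha\wedge\beta\rangle$ the wedge product followed by contraction with the inner product. $\mathcal Z^2_Q(\mathfrak l,\mathfrak a)=\{(\alpha,\gamma)\in C^2(\mathfrak l,\mathfrak a)\oplus C^3(\mathfrak l): d\alpha=0,d\gamma=\frac12\langle\alpha\wedge\alpha\rangle\}$; the group $C^1(\mathfrak l,\mathfrak a)\oplus C^2(\mathfrak l)$ with $(\tau_1,\sigma_1)*(\tau_2,\sigma_2)=(\tau_1+\tau_2,\sigma_1+\sigma_2+\frac12\langle\tau_1\wedge\tau_2\rangle)$ acts by $(\alpha,\gamma)(\tau,\sigma)=(\alpha+d\tau,\gamma+d\sigma+\langle(\alpha+\frac12d\tau)\wedge\tau\rangle)$;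 $\mathcal H^2_Q(\mathfrak l,\mathfrak a)$ is the orbit set (for $\mathfrak a=0$ it is $H^3(\mathfrak l)$). Admissibility (trivial $\mathfrak a$): with $\mathfrak l^{m+2}=0$, $\mathfrak l_{(0)}=\mathfrak z(\mathfrak l)$, $\mathfrak l_{(k)}=\mathfrak z(\mathfrak l)\cap\mathfrak l^{k+1}$ ($k\ge1$), a class $[\alpha,\gamma]$ is admissible iff for all $0\le k\le m$: $(A_k)$ whenever $L_0\in\mathfrak l_{(k)}$ and there are $A_0\in\mathfrak a$, $Z_0\in(\mathfrak l^{k+1})^*$ with $\alpha(L,L_0)=0$ and $\gamma(L,L_0,\cdot)=-\langle A_0,\alpha(L,\cdot)\rangle+\langle Z_0,[L,\cdot]\rangle$ on $\mathfrak l^{k+1}$ for all $L$, then $L_0=0$; $(B_k)$ $\alpha$ applied to the kernel of the bracket map $\mathfrak l\otimes\mathfrak l^{k+1}\to\mathfrak l$ is a nondegenerate subspace of $\mathfrak a$. A class $\varphi$ is decomposable if there are decompositions $\mathfrak a=\mathfrak a_1\oplus\mathfrak a_2$ (orthogonal, into nondegenerate subspaces) and $\mathfrak l=\mathfrak l_1\oplus\mathfrak l_2$ (Lie algebra direct sum), at least one non-trivial, and classes $\varphi_i\in\mathcal H^2_Q(\mathfrak l_i,\mathfrak a_i)$ with $\varphi=(q_1,j_1)^*\varphi_1+(q_2,j_2)^*\varphi_2$, where $q_i:\mathfrak l\to\mathfrak l_i$ are projections, $j_i:\mathfrak a_i\to\mathfrak a$ inclusions, and $(q,j)^*(\alpha,\gamma)=(j\circ\alpha\circ(q\times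 q),\gamma\circ(q\times q\times q))$ (sums taken on representatives componentwise). $\mathcal H^2_Q(\mathfrak l,\mathfrak a)_0$ is the set of admissible indecomposable classes. *)

theory Defs
  imports "HOL-Analysis.Analysis"
begin

definition lie_algebra :: "('a::real_vector \<Rightarrow> 'a \<Rightarrow> 'a) \<Rightarrow> bool" where
  "lie_algebra B \<longleftrightarrow>
     (\<forall>y. linear (\<lambda>x. B x y)) \<and> (\<forall>x. linear (B x)) \<and> (\<forall>x. B x x = 0) \<and>
     (\<forall>x y z. B x (B y z) + B y (B z x) + B z (B x y) = 0)"

text \<open>Lower central series: lcs B 1 = l, lcs B (k+1) = [l, lcs B k]; lcs B 0 = l by convention.\<close>
fun lcs :: "('a::real_vector \<Rightarrow> 'a \<Rightarrow> 'a) \<Rightarrow> nat \<Rightarrow> 'a set" where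
  "lcs B 0 = UNIV"
| "lcs B (Suc 0) = UNIV"
| "lcs B (Suc (Suc k)) = span {B x y | x y. y \<in> lcs B (Suc k)}"

definition nilpotent_lie :: "('a::real_vector \<Rightarrow> 'a \<Rightarrow> 'a) \<Rightarrow> bool" where
  "nilpotent_lie B \<longleftrightarrow> (\<exists>k. lcs B k = {0})"

definition centre :: "('a::real_vector \<Rightarrow> 'a \<Rightarrow> 'a) \<Rightarrow> 'a set" where
  "centre B = {z. \<forall>x. B x z = 0}"

definition lie_iso :: "('a::real_vector \<Rightarrow> 'a \<Rightarrow> 'a) \<Rightarrow> ('b::real_vector \<Rightarrow> 'b \<Rightarrow> 'b) \<Rightarrow> ('a \<Rightarrow> 'b) \<Rightarrow> bool" where
  "lie_iso B C f \<longleftrightarrow> linear f \<and> bij f \<and> (\<forall>x y. f (B x y) = C (f x) (f y))"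

text \<open>Abelian Lie algebra R^5 and g_{5,2} on real^5; basis X1,X2,X3,Y,Z = axis 0,..,axis 4.\<close>
definition abelian5 :: "real^5 \<Rightarrow> real^5 \<Rightarrow> real^5" where
  "abelian5 x y = 0"

definition g52 :: "real^5 \<Rightarrow> real^5 \<Rightarrow> real^5" where
  "g52 x y = (x$0 * y$1 - x$1 * y$0) *\<^sub>R axis 3 1 + (x$0 * y$2 - x$2 * y$0) *\<^sub>R axis 4 1"

definition lin_on :: "'a::real_vector set \<Rightarrow> ('a \<Rightarrow> real) \<Rightarrow> bool" where
  "lin_on S f \<longleftrightarrow> (\<forall>x\<in>S. \<forall>y\<in>S. \<forall>a b. f (a *\<^sub>R x + b *\<^sub>R y) = a * f x + b * f y)"

definition alt2_on :: "'a::real_vector set \<Rightarrow> ('a \<Rightarrow> 'a \<Rightarrow> real) \<Rightarrow> bool" where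
  "alt2_on S s \<longleftrightarrow> (\<forall>y\<in>S. lin_on S (\<lambda>x. s x y)) \<and> (\<forall>x\<in>S. lin_on S (s x)) \<and> (\<forall>x\<in>S. s x x = 0)"

definition alt3_on :: "'a::real_vector set \<Rightarrow> ('a \<Rightarrow> 'a \<Rightarrow> 'a \<Rightarrow> real) \<Rightarrow> bool" where
  "alt3_on S g \<longleftrightarrow>
     (\<forall>y\<in>S. \<forall>z\<in>S. lin_on S (\<lambda>x. g x y z)) \<and>
     (\<forall>x\<in>S. \<forall>z\<in>S. lin_on S (\<lambda>y. g x y z)) \<and>
     (\<forall>x\<in>S. \<forall>y\<in>S. lin_on S (g x y)) \<and>
     (\<forall>x\<in>S. \<forall>z\<in>S. g x x z = 0 \<and> g x z x = 0 \<and> g z x x = 0)"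

definition d2 :: "('a \<Rightarrow> 'a \<Rightarrow> 'a) \<Rightarrow> ('a \<Rightarrow> 'a \<Rightarrow> real) \<Rightarrow> 'a \<Rightarrow> 'a \<Rightarrow> 'a \<Rightarrow> real" where
  "d2 B s x0 x1 x2 = - s (B x0 x1) x2 + s (B x0 x2) x1 - s (B x1 x2) x0"

definition d3 :: "('a \<Rightarrow> 'a \<Rightarrow> 'a) \<Rightarrow> ('a \<Rightarrow> 'a \<Rightarrow> 'a \<Rightarrow> real) \<Rightarrow> 'a \<Rightarrow> 'a \<Rightarrow> 'a \<Rightarrow> 'a \<Rightarrow> real" where
  "d3 B g x0 x1 x2 x3 =
     - g (B x0 x1) x2 x3 + g (B x0 x2) x1 x3 - g (B x0 x3) x1 x2
     - g (B x1 x2) x0 x3 + g (B x1 x3) x0 x2 - g (B x2 x3) x0 x1"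

definition cocycle3_on :: "('a::real_vector \<Rightarrow> 'a \<Rightarrow> 'a) \<Rightarrow> 'a set \<Rightarrow> ('a \<Rightarrow> 'a \<Rightarrow> 'a \<Rightarrow> real) \<Rightarrow> bool" where
  "cocycle3_on B S g \<longleftrightarrow> alt3_on S g \<and>
     (\<forall>x0\<in>S. \<forall>x1\<in>S. \<forall>x2\<in>S. \<forall>x3\<in>S. d3 B g x0 x1 x2 x3 = 0)"

section \<open>H^2_Q(l,0) = H^3(l): orbits of (0,gamma) under gamma \<mapsto> gamma + d sigma\<close>

definition qclass :: "('a::real_vector \<Rightarrow> 'a \<Rightarrow> 'a) \<Rightarrow> ('a \<Rightarrow> 'a \<Rightarrow> 'a \<Rightarrow> real) \<Rightarrow> ('a \<Rightarrow> 'a \<Rightarrow> 'a \<Rightarrow> real) set" where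
  "qclass B g = {g'. \<exists>s. alt2_on UNIV s \<and> g' = (\<lambda>x y z. g x y z + d2 B s x y z)}"

definition HQ :: "('a::real_vector \<Rightarrow> 'a \<Rightarrow> 'a) \<Rightarrow> ('a \<Rightarrow> 'a \<Rightarrow> 'a \<Rightarrow> real) set set" where
  "HQ B = {qclass B g | g. cocycle3_on B UNIV g}"

text \<open>Admissibility for a = 0: condition (A_k) (alpha = 0, the A_0 term vanishes);
  condition (B_k) is automatic since the zero subspace of a = 0 is nondegenerate.
  Conditions for k > m are vacuous (there l_(k) = 0), so we quantify over all k.\<close>
definition admissible_rep :: "('a::real_vector \<Rightarrow> 'a \<Rightarrow> 'a) \<Rightarrow> ('a \<Rightarrow> 'a \<Rightarrow> 'a \<Rightarrow> real) \<Rightarrow> bool" where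
  "admissible_rep B g \<longleftrightarrow>
     (\<forall>k. \<forall>L0 \<in> centre B \<inter> lcs B (k+1).
        (\<exists>Z0. lin_on (lcs B (k+1)) Z0 \<and>
              (\<forall>L. \<forall>X\<in>lcs B (k+1). g L L0 X = Z0 (B L X))) \<longrightarrow> L0 = 0)"

definition lie_decomp :: "('a::real_vector \<Rightarrow> 'a \<Rightarrow> 'a) \<Rightarrow> 'a set \<Rightarrow> 'a set \<Rightarrow> bool" where
  "lie_decomp B l1 l2 \<longleftrightarrow> subspace l1 \<and> subspace l2 \<and> l1 \<inter> l2 = {0} \<and>
     (\<forall>x. \<exists>u\<in>l1. \<exists>v\<in>l2. x = u + v) \<and>
     (\<forall>x\<in>l1. \<forall>y\<in>l1. B x y \<in> l1) \<and> (\<forall>x\<in>l2. \<forall>y\<in>l2. B x y \<in> l2) \<and>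
     (\<forall>x\<in>l1. \<forall>y\<in>l2. B x y = 0)"

definition proj :: "'a::real_vector set \<Rightarrow> 'a set \<Rightarrow> 'a \<Rightarrow> 'a" where
  "proj S T x = (THE u. u \<in> S \<and> x - u \<in> T)"

text \<open>For a = 0 the decomposition of a is necessarily trivial, so the decomposition of l
  must be non-trivial (both summands nonzero).\<close>
definition decomposable :: "('a::real_vector \<Rightarrow> 'a \<Rightarrow> 'a) \<Rightarrow> ('a \<Rightarrow> 'a \<Rightarrow> 'a \<Rightarrow> real) set \<Rightarrow> bool" where
  "decomposable B c \<longleftrightarrow>
     (\<exists>l1 l2 g1 g2. lie_decomp B l1 l2 \<and> l1 \<noteq> {0} \<and> l2 \<noteq> {0} \<and>
        cocycle3_on B l1 g1 \<and> cocycle3_on B l2 g2 \<and>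
        c = qclass B (\<lambda>x y z. g1 (proj l1 l2 x) (proj l1 l2 y) (proj l1 l2 z)
                             + g2 (proj l2 l1 x) (proj l2 l1 y) (proj l2 l1 z)))"

definition HQ0 :: "('a::real_vector \<Rightarrow> 'a \<Rightarrow> 'a) \<Rightarrow> ('a \<Rightarrow> 'a \<Rightarrow> 'a \<Rightarrow> real) set set" where
  "HQ0 B = {c \<in> HQ B. (\<exists>g. c = qclass B g \<and> admissible_rep B g) \<and> \<not> decomposable B c}"

end

theory Submission
  imports Defs
begin


lemma indep_fun:
  fixes f :: "nat \<Rightarrow> 'a::euclidean_space"
  assumes H: "\<And>c. (\<Sum>i<n. c i *\<^sub>R f i) = 0 \<Longrightarrow> \<forall>i<n. c i = 0"
  shows "inj_on f {..<n}" "independent (f ` {..<n})" "card (f ` {..<n}) = n"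
proof -
  show inj: "inj_on f {..<n}"
  proof (rule inj_onI, rule ccontr)
    fix i j assume ij: "i \<in> {..<n}" "j \<in> {..<n}" "f i = f j" "i \<noteq> j"
    define c where "c k = (if k = i then 1 else 0) - (if k = j then (1::real) else 0)" for k
    have "(\<Sum>k<n. c k *\<^sub>R f k) = (\<Sum>k<n. (if k = i then f k else 0) - (if k = j then f k else 0))"
      by (rule sum.cong) (auto simp: c_def)
    also have "\<dots> = (\<Sum>k<n. (if k = i then f k else 0)) - (\<Sum>k<n. (if k = j then f k else 0))"
      by (rule sum_subtractf)
    also have "\<dots> = 0" using ij by simp
    finally have "\<forall>k<n. c k = 0" by (rule H)
    then have "c i = 0" using ij by auto
    then show False using ij by (simp add: c_def)
  qed
  show "independent (f ` {..<n})"
  proof (rule independent_if_scalars_zero)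
    show "finite (f ` {..<n})" by simp
    fix u x assume s: "(\<Sum>x\<in>f ` {..<n}. u x *\<^sub>R x) = 0" and x: "x \<in> f ` {..<n}"
    have "(\<Sum>i<n. (u \<circ> f) i *\<^sub>R f i) = 0" using s by (simp add: sum.reindex[OF inj])
    then have "\<forall>i<n. u (f i) = 0" using H[of "u \<circ> f"] by simp
    then show "u x = 0" using x by auto
  qed
  show "card (f ` {..<n}) = n" using inj by (simp add: card_image)
qed

lemma indep_fun_le:
  fixes f :: "nat \<Rightarrow> 'a::euclidean_space"
  assumes H: "\<And>c. (\<Sum>i<n. c i *\<^sub>R f i) = 0 \<Longrightarrow> \<forall>i<n. c i = 0"
  shows "n \<le> DIM('a)"
  using indep_fun[OF H] independent_bound by metis

lemma indep_fun_span:
  fixes f :: "nat \<Rightarrow> 'a::euclidean_space"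
  assumes H: "\<And>c. (\<Sum>i<n. c i *\<^sub>R f i) = 0 \<Longrightarrow> \<forall>i<n. c i = 0"
    and n: "n = DIM('a)"
  shows "\<exists>c. x = (\<Sum>i<n. c i *\<^sub>R f i)"
proof -
  have i1: "independent (f ` {..<n})" and i2: "card (f ` {..<n}) = n"
    using indep_fun(2,3)[OF H] by blast+
  have "UNIV \<subseteq> span (f ` {..<n})"
    by (rule card_ge_dim_independent[OF _ i1]) (use i2 n in auto)
  then have "x \<in> span (f ` {..<n})" by auto
  then obtain u where "(\<Sum>v\<in>f ` {..<n}. u v *\<^sub>R v) = x"
    using span_finite[of "f ` {..<n}"] by auto
  then have "x = (\<Sum>i<n. (u \<circ> f) i *\<^sub>R f i)"
    by (simp add: sum.reindex[OF indep_fun(1)[OF H]])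
  then show ?thesis by blast
qed

lemma six_False:
  fixes a b c d e f :: "'a::euclidean_space"
  assumes D: "DIM('a) = 5"
    and H: "\<And>x1 x2 x3 x4 x5 x6. x1 *\<^sub>R a + x2 *\<^sub>R b + x3 *\<^sub>R c + x4 *\<^sub>R d + x5 *\<^sub>R e + x6 *\<^sub>R f = 0
       \<Longrightarrow> x1 = 0 \<and> x2 = 0 \<and> x3 = 0 \<and> x4 = 0 \<and> x5 = 0 \<and> x6 = 0"
  shows False
proof -
  have "6 \<le> DIM('a)"
  proof (rule indep_fun_le[where f = "\<lambda>i. [a,b,c,d,e,f] ! i"])
    fix x :: "nat \<Rightarrow> real"
    assume "(\<Sum>i<6. x i *\<^sub>R [a, b, c, d, e, f] ! i) = 0"
    then have "x 0 *\<^sub>R a + x 1 *\<^sub>R b + x 2 *\<^sub>R c + x 3 *\<^sub>R d + x 4 *\<^sub>R e + x 5 *\<^sub>R f = 0"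
      by (simp add: numeral_eq_Suc lessThan_Suc add_ac)
    then have "x 0 = 0 \<and> x 1 = 0 \<and> x 2 = 0 \<and> x 3 = 0 \<and> x 4 = 0 \<and> x 5 = 0" by (rule H)
    then show "\<forall>i<6. x i = 0" by (auto simp: numeral_eq_Suc less_Suc_eq)
  qed
  then show False using D by simp
qed

lemma five_span:
  fixes a b c d e :: "'a::euclidean_space"
  assumes D: "DIM('a) = 5"
    and H: "\<And>x1 x2 x3 x4 x5. x1 *\<^sub>R a + x2 *\<^sub>R b + x3 *\<^sub>R c + x4 *\<^sub>R d + x5 *\<^sub>R e = 0
       \<Longrightarrow> x1 = 0 \<and> x2 = 0 \<and> x3 = 0 \<and> x4 = 0 \<and> x5 = 0"
  shows "\<exists>x1 x2 x3 x4 x5. v = x1 *\<^sub>R a + x2 *\<^sub>R b + x3 *\<^sub>R c + x4 *\<^sub>R d + x5 *\<^sub>R e"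
proof -
  have "\<exists>x. v = (\<Sum>i<5. x i *\<^sub>R [a,b,c,d,e] ! i)"
  proof (rule indep_fun_span)
    fix x :: "nat \<Rightarrow> real"
    assume "(\<Sum>i<5. x i *\<^sub>R [a, b, c, d, e] ! i) = 0"
    then have "x 0 *\<^sub>R a + x 1 *\<^sub>R b + x 2 *\<^sub>R c + x 3 *\<^sub>R d + x 4 *\<^sub>R e = 0"
      by (simp add: numeral_eq_Suc lessThan_Suc add_ac)
    then have "x 0 = 0 \<and> x 1 = 0 \<and> x 2 = 0 \<and> x 3 = 0 \<and> x 4 = 0" by (rule H)
    then show "\<forall>i<5. x i = 0" by (auto simp: numeral_eq_Suc less_Suc_eq)
  qed (use D in simp)
  then obtain x where "v = (\<Sum>i<5. x i *\<^sub>R [a,b,c,d,e] ! i)" by blast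
  then have "v = x 0 *\<^sub>R a + x 1 *\<^sub>R b + x 2 *\<^sub>R c + x 3 *\<^sub>R d + x 4 *\<^sub>R e"
    by (simp add: numeral_eq_Suc lessThan_Suc add_ac)
  then show ?thesis by blast
qed

lemma exhaust_5:
  fixes x :: 5
  shows "x = 0 \<or> x = 1 \<or> x = 2 \<or> x = 3 \<or> x = 4"
proof (induct x)
  case (of_int z)
  then have "z = 0 \<or> z = 1 \<or> z = 2 \<or> z = 3 \<or> z = 4" by fastforce
  then show ?case by auto
qed




definition ind2 :: "'a::real_vector \<Rightarrow> 'a \<Rightarrow> bool" where
  "ind2 p q \<longleftrightarrow> (\<forall>\<alpha> \<beta>. \<alpha> *\<^sub>R p + \<beta> *\<^sub>R q = 0 \<longrightarrow> \<alpha> = 0 \<and> \<beta> = 0)"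

lemma not_ind2:
  assumes "\<not> ind2 p q" "p \<noteq> 0" shows "\<exists>l. q = l *\<^sub>R p"
proof -
  obtain \<alpha> \<beta> where h: "\<alpha> *\<^sub>R p + \<beta> *\<^sub>R q = 0" "\<alpha> \<noteq> 0 \<or> \<beta> \<noteq> 0"
    using assms(1) unfolding ind2_def by blast
  show ?thesis
  proof (cases "\<beta> = 0")
    case True then show ?thesis using h assms(2) by simp
  next
    case False
    have "\<beta> *\<^sub>R q = - (\<alpha> *\<^sub>R p)" using h(1) by (simp add: eq_neg_iff_add_eq_0 add.commute)
    then have "(1/\<beta>) *\<^sub>R (\<beta> *\<^sub>R q) = (1/\<beta>) *\<^sub>R (- (\<alpha> *\<^sub>R p))" by simp
    then have "q = (- \<alpha> / \<beta>) *\<^sub>R p" using False by simp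
    then show ?thesis by blast
  qed
qed

lemma ind2_nz: "ind2 p q \<Longrightarrow> p \<noteq> 0 \<and> q \<noteq> 0"
  unfolding ind2_def by (metis add.right_neutral add_0 scaleR_one scaleR_zero_left scaleR_zero_right zero_neq_one)

lemma ind2_both:
  assumes "ind2 y w" "v = l *\<^sub>R y" "v = m *\<^sub>R w" shows "v = 0"
proof -
  have "l *\<^sub>R y + (- m) *\<^sub>R w = 0" using assms(2,3) by simp
  then have "l = 0" using assms(1) unfolding ind2_def by blast
  then show ?thesis using assms(2) by simp
qed

context
  fixes B :: "'a::euclidean_space \<Rightarrow> 'a \<Rightarrow> 'a"
  assumes lie: "lie_algebra B"
begin

lemma B_lin1: "linear (\<lambda>x. B x y)"
  using lie unfolding lie_algebra_def by blast
lemma B_lin2: "linear (B x)"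
  using lie unfolding lie_algebra_def by blast

lemma B_add1[simp]: "B (x + y) z = B x z + B y z"
  using linear_add[OF B_lin1[of z]] by simp
lemma B_add2[simp]: "B z (x + y) = B z x + B z y"
  using linear_add[OF B_lin2[of z]] by simp
lemma B_scale1[simp]: "B (c *\<^sub>R x) z = c *\<^sub>R B x z"
  using linear_scale[OF B_lin1[of z]] by simp
lemma B_scale2[simp]: "B z (c *\<^sub>R x) = c *\<^sub>R B z x"
  using linear_scale[OF B_lin2[of z]] by simp
lemma B_zero1[simp]: "B 0 z = 0"
  using linear_0[OF B_lin1[of z]] by simp
lemma B_zero2[simp]: "B z 0 = 0"
  using linear_0[OF B_lin2[of z]] by simp
lemma B_self[simp]: "B x x = 0"
  using lie unfolding lie_algebra_def by blast
lemma B_neg1[simp]: "B (- x) z = - B x z"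
  using linear_neg[OF B_lin1[of z]] by simp
lemma B_neg2[simp]: "B z (- x) = - B z x"
  using linear_neg[OF B_lin2[of z]] by simp
lemma B_diff1[simp]: "B (x - y) z = B x z - B y z"
  using linear_diff[OF B_lin1[of z]] by simp
lemma B_diff2[simp]: "B z (x - y) = B z x - B z y"
  using linear_diff[OF B_lin2[of z]] by simp
lemma B_anti: "B y x = - B x y"
proof -
  have "B x y + B y x = B (x + y) (x + y)"
    by (simp del: B_self add: B_self[of x] B_self[of y])
  also have "\<dots> = 0" by (rule B_self)
  finally have "B x y + B y x = 0" .
  then show ?thesis by (simp add: eq_neg_iff_add_eq_0 add.commute)
qed

lemma lcs_subspace: "subspace (lcs B k)"
proof (cases k)
  case 0 then show ?thesis by (simp add: subspace_UNIV)
next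
  case (Suc j) then show ?thesis
    by (cases j) (auto simp: subspace_UNIV subspace_span)
qed

lemma lcs_mem: "1 \<le> k \<Longrightarrow> y \<in> lcs B k \<Longrightarrow> B x y \<in> lcs B (Suc k)"
  by (cases k) (auto intro: span_base)

lemma lcs_mono: "lcs B (Suc k) \<subseteq> lcs B k"
proof (induction k rule: nat_less_induct)
  case (1 n)
  show ?case
  proof (cases n)
    case 0 then show ?thesis by simp
  next
    case (Suc j)
    show ?thesis
    proof (cases j)
      case 0 then show ?thesis using Suc by simp
    next
      case (Suc i)
      have IH2: "lcs B (Suc (Suc i)) \<subseteq> lcs B (Suc i)"
        using 1[rule_format, of "Suc i"] \<open>n = Suc j\<close> Suc by blast
      have "lcs B (Suc (Suc (Suc i))) = span {B x y |x y. y \<in> lcs B (Suc (Suc i))}" by simp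
      also have "\<dots> \<subseteq> span {B x y |x y. y \<in> lcs B (Suc i)}"
        apply (rule span_mono) using IH2 by blast
      finally show ?thesis using \<open>n = Suc j\<close> Suc by simp
    qed
  qed
qed

lemma lcs_antimono: "i \<le> j \<Longrightarrow> lcs B j \<subseteq> lcs B i"
proof (induction j)
  case 0 then show ?case by simp
next
  case (Suc j)
  then show ?case using lcs_mono[of j] by (cases "i = Suc j") auto
qed

lemma lcs_stable: "lcs B (Suc (Suc k)) = lcs B (Suc k) \<Longrightarrow> j \<ge> Suc k \<Longrightarrow> lcs B j = lcs B (Suc k)"
proof (induction j)
  case 0 then show ?case by simp
next
  case (Suc j)
  show ?case
  proof (cases "j = k")
    case True then show ?thesis using Suc by simp
  next
    case False
    then have j: "j \<ge> Suc k" using Suc by simp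
    then obtain i where i: "j = Suc i" by (cases j) auto
    have e: "lcs B (Suc i) = lcs B (Suc k)" using Suc.IH[OF Suc.prems(1) j] i by (simp only:)
    have "lcs B (Suc (Suc i)) = span {B x y |x y. y \<in> lcs B (Suc i)}" by simp
    also have "\<dots> = span {B x y |x y. y \<in> lcs B (Suc k)}" by (simp only: e)
    also have "\<dots> = lcs B (Suc (Suc k))" by simp
    finally have "lcs B (Suc (Suc i)) = lcs B (Suc (Suc k))" .
    then show ?thesis using Suc.prems(1) i by (simp only:)
  qed
qed

lemma lcs_strict:
  assumes nil: "nilpotent_lie B" and ne: "lcs B (Suc k) \<noteq> {0}"
  shows "lcs B (Suc (Suc k)) \<subset> lcs B (Suc k)"
proof -
  obtain N where N: "lcs B N = {0}" using nil unfolding nilpotent_lie_def by blast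
  have "lcs B (Suc (Suc k)) \<noteq> lcs B (Suc k)"
  proof
    assume e: "lcs B (Suc (Suc k)) = lcs B (Suc k)"
    have "lcs B (Suc k) = lcs B (max N (Suc k))" using lcs_stable[OF e, of "max N (Suc k)"] by simp
    also have "\<dots> \<subseteq> lcs B N" by (rule lcs_antimono) simp
    finally show False using N ne lcs_subspace[of "Suc k"] by (auto simp: subspace_0)
  qed
  then show ?thesis using lcs_mono[of "Suc k"] by blast
qed

lemma dim_strict:
  assumes nil: "nilpotent_lie B" and ne: "lcs B (Suc k) \<noteq> {0}"
  shows "dim (lcs B (Suc (Suc k))) < dim (lcs B (Suc k))"
proof -
  have s1: "span (lcs B (Suc (Suc k))) = lcs B (Suc (Suc k))"
    by (rule span_eq_iff[THEN iffD2, OF lcs_subspace])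
  have s2: "span (lcs B (Suc k)) = lcs B (Suc k)"
    by (rule span_eq_iff[THEN iffD2, OF lcs_subspace])
  show ?thesis by (metis dim_psubset s1 s2 lcs_strict[OF nil ne])
qed

lemma lcs_central: "lcs B (Suc (Suc k)) = {0} \<Longrightarrow> z \<in> lcs B (Suc k) \<Longrightarrow> z \<in> centre B"
  using lcs_mem[of "Suc k" z] by (auto simp: centre_def)

end



declare lcs.simps[simp del]

lemma lin_on_add: "lin_on UNIV f \<Longrightarrow> f (x + y) = f x + f y"
  unfolding lin_on_def by (metis scaleR_one mult_1 UNIV_I)
lemma lin_on_scale: "lin_on UNIV f \<Longrightarrow> f (c *\<^sub>R x) = c * f x"
  unfolding lin_on_def by (metis UNIV_I add.right_neutral mult_zero_left scaleR_zero_left)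

context
  fixes g :: "'a::real_vector \<Rightarrow> 'a \<Rightarrow> 'a \<Rightarrow> real"
  assumes alt: "alt3_on UNIV g"
begin
lemma g_lin1: "lin_on UNIV (\<lambda>x. g x y z)" using alt unfolding alt3_on_def by blast
lemma g_lin2: "lin_on UNIV (\<lambda>y. g x y z)" using alt unfolding alt3_on_def by blast
lemma g_lin3: "lin_on UNIV (g x y)" using alt unfolding alt3_on_def by blast
lemma g_add1: "g (x + x') y z = g x y z + g x' y z" using lin_on_add[OF g_lin1] by simp
lemma g_add2: "g x (y + y') z = g x y z + g x y' z" using lin_on_add[OF g_lin2] by simp
lemma g_add3: "g x y (z + z') = g x y z + g x y z'" using lin_on_add[OF g_lin3] by simp
lemma g_scale1: "g (c *\<^sub>R x) y z = c * g x y z" using lin_on_scale[OF g_lin1] by simp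
lemma g_scale2: "g x (c *\<^sub>R y) z = c * g x y z" using lin_on_scale[OF g_lin2] by simp
lemma g_scale3: "g x y (c *\<^sub>R z) = c * g x y z" using lin_on_scale[OF g_lin3] by simp
lemma g_zero1: "g 0 y z = 0" using g_scale1[of 0 0] by simp
lemma g_zero2: "g x 0 z = 0" using g_scale2[of _ 0 0] by simp
lemma g_zero3: "g x y 0 = 0" using g_scale3[of _ _ 0 0] by simp
lemma g_xxz: "g x x z = 0" and g_xzx: "g x z x = 0" and g_zxx: "g z x x = 0"
  using alt unfolding alt3_on_def by blast+
lemma g_swap12: "g y x z = - g x y z"
proof -
  have "g (x + y) (x + y) z = g x x z + g x y z + (g y x z + g y y z)" by (simp only: g_add1 g_add2)
  then show ?thesis using g_xxz[of x z] g_xxz[of y z] g_xxz[of "x + y" z] by linarith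
qed
lemma g_swap23: "g x z y = - g x y z"
proof -
  have "g x (y + z) (y + z) = g x y y + g x y z + (g x z y + g x z z)" by (simp only: g_add2 g_add3)
  then show ?thesis using g_zxx[where x=y and z=x] g_zxx[where x=z and z=x] g_zxx[where x="y+z" and z=x] by linarith
qed
end

locale S5 =
  fixes B :: "'a::euclidean_space \<Rightarrow> 'a \<Rightarrow> 'a" and g g0 :: "'a \<Rightarrow> 'a \<Rightarrow> 'a \<Rightarrow> real"
  assumes lie: "lie_algebra B" and dim5: "DIM('a) = 5" and nil: "nilpotent_lie B"
    and coc: "cocycle3_on B UNIV g0" and adm: "admissible_rep B g"
    and rel: "\<And>L z X. z \<in> centre B \<Longrightarrow> X \<in> centre B \<Longrightarrow> g L z X = g0 L z X"
begin

lemmas Bsimps[simp] = B_add1[OF lie] B_add2[OF lie] B_scale1[OF lie] B_scale2[OF lie]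
  B_zero1[OF lie] B_zero2[OF lie] B_self[OF lie] B_neg1[OF lie] B_neg2[OF lie]
  B_diff1[OF lie] B_diff2[OF lie]
lemmas B_anti = B_anti[OF lie]
lemmas lcs_subspace = lcs_subspace[OF lie]
lemmas lcs_mem = lcs_mem[OF lie]
lemmas lcs_mono = lcs_mono[OF lie]
lemmas lcs_central = lcs_central[OF lie]
lemmas dim_strict = dim_strict[OF lie nil]
lemmas lcs_strict = lcs_strict[OF lie nil]

lemma alt0: "alt3_on UNIV g0" using coc unfolding cocycle3_on_def by blast
lemma cocy: "d3 B g0 x0 x1 x2 x3 = 0" using coc unfolding cocycle3_on_def by blast

lemmas gs = g_add1[OF alt0] g_add2[OF alt0] g_add3[OF alt0] g_scale1[OF alt0] g_scale2[OF alt0]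
  g_scale3[OF alt0] g_zero1[OF alt0] g_zero2[OF alt0] g_zero3[OF alt0] g_xxz[OF alt0] g_xzx[OF alt0]
  g_zxx[OF alt0]
lemmas g_swap12 = g_swap12[OF alt0]
lemmas g_swap23 = g_swap23[OF alt0]

lemma span_lcs: "span (lcs B k) = lcs B k"
  by (rule span_eq_iff[THEN iffD2, OF lcs_subspace])

lemma in_span2: "X \<in> span {z, u} \<Longrightarrow> \<exists>p q. X = p *\<^sub>R z + q *\<^sub>R u"
proof -
  assume "X \<in> span {z, u}"
  then obtain p where "X - p *\<^sub>R z \<in> span {u}" using span_breakdown_eq[of X z "{u}"] by auto
  then obtain q where "X - p *\<^sub>R z = q *\<^sub>R u" using span_singleton[of u] by auto
  then have "X = p *\<^sub>R z + q *\<^sub>R u" by (simp add: algebra_simps)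
  then show ?thesis by blast
qed

lemma adm_gen:
  assumes top: "lcs B (Suc (Suc k)) = {0}" and z: "z \<in> lcs B (Suc k)"
    and sub: "lcs B (Suc k) \<subseteq> span {z, u}" and gz: "\<And>L. g0 L z u = 0"
  shows "z = 0"
proof -
  have zc: "z \<in> centre B" by (rule lcs_central[OF top z])
  have H: "\<forall>L. \<forall>X\<in>lcs B (k+1). g L z X = (\<lambda>_. 0) (B L X)"
  proof (intro allI ballI)
    fix L X assume X: "X \<in> lcs B (k+1)"
    then have Xc: "X \<in> centre B" using lcs_central[OF top] by simp
    have X': "X \<in> lcs B (Suc k)" using X by simp
    obtain p q where pq: "X = p *\<^sub>R z + q *\<^sub>R u" using in_span2[of X z u] sub X' by blast
    have "g L z X = g0 L z X" by (rule rel[OF zc Xc])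
    also have "\<dots> = p * g0 L z z + q * g0 L z u" by (simp add: pq gs)
    also have "\<dots> = 0" by (simp add: gz gs)
    finally show "g L z X = (\<lambda>_. 0) (B L X)" by simp
  qed
  have lin0: "lin_on (lcs B (k+1)) (\<lambda>_. 0)" unfolding lin_on_def by simp
  have "z \<in> centre B \<inter> lcs B (k+1)" using zc z by simp
  then show ?thesis using adm H lin0 unfolding admissible_rep_def by blast
qed

lemma indep_single: "z \<noteq> 0 \<Longrightarrow> independent {z}"
  using independent_insert[of z "{}"] by (simp add: independent_empty span_empty)

lemma dim_pos: "subspace (S::'a set) \<Longrightarrow> S \<noteq> {0} \<Longrightarrow> 1 \<le> dim S"
proof -
  assume S: "subspace S" "S \<noteq> {0}"
  then obtain z where z: "z \<in> S" "z \<noteq> 0" using subspace_0 by blast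
  have "card {z} \<le> dim S" by (intro independent_card_le_dim) (use z indep_single in auto)
  then show ?thesis by simp
qed

lemma dim_ge2:
  assumes top: "lcs B (Suc (Suc k)) = {0}" and ne: "lcs B (Suc k) \<noteq> {0}"
  shows "2 \<le> dim (lcs B (Suc k))"
proof (rule ccontr)
  assume d: "\<not> 2 \<le> dim (lcs B (Suc k))"
  obtain z where z: "z \<in> lcs B (Suc k)" "z \<noteq> 0" using ne subspace_0[OF lcs_subspace] by blast
  have sub: "lcs B (Suc k) \<subseteq> span {z, z}"
  proof
    fix X assume X: "X \<in> lcs B (Suc k)"
    show "X \<in> span {z, z}"
    proof (rule ccontr)
      assume nX: "X \<notin> span {z, z}"
      then have Xz: "X \<noteq> z" using span_base[of z "{z}"] by auto
      have "independent (insert X {z})"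
        using independent_insert[of X "{z}"] nX Xz indep_single[OF z(2)] by auto
      then have "card (insert X {z}) \<le> dim (lcs B (Suc k))"
        by (intro independent_card_le_dim) (use X z in auto)
      then show False using d Xz by simp
    qed
  qed
  have "z = 0" by (rule adm_gen[OF top z(1) sub]) (simp add: gs)
  then show False using z by simp
qed

lemma lcs1: "lcs B (Suc 0) = UNIV" by (simp add: lcs.simps)
lemma lcsSS: "lcs B (Suc (Suc k)) = span {B x y |x y. y \<in> lcs B (Suc k)}" by (simp add: lcs.simps)

lemma codim:
  assumes ne: "lcs B (Suc (Suc 0)) \<noteq> {0}"
  shows "dim (lcs B (Suc (Suc 0))) \<noteq> 4"
proof
  assume d4: "dim (lcs B (Suc (Suc 0))) = 4"
  let ?L2 = "lcs B (Suc (Suc 0))" and ?L3 = "lcs B (Suc (Suc (Suc 0)))"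
  have "dim (UNIV::'a set) = 5" by (simp add: dim5)
  then have "?L2 \<noteq> UNIV"
  proof (intro notI)
    assume "dim (UNIV::'a set) = 5" "?L2 = UNIV"
    then have "dim ?L2 = 5" by (simp only:)
    then show False using d4 by (simp only:)
  qed
  then obtain x where x: "x \<notin> ?L2" by blast
  have "dim (insert x ?L2) = 5" using dim_insert[of x ?L2] x d4 by (simp add: span_lcs)
  then have sp: "span (insert x ?L2) = UNIV" using dim_eq_full dim5 by metis
  have dec: "\<exists>s p'. p' \<in> ?L2 \<and> p = s *\<^sub>R x + p'" for p
  proof -
    have "p \<in> span (insert x ?L2)" using sp by simp
    then obtain s where "p - s *\<^sub>R x \<in> span ?L2" using span_breakdown_eq by blast
    then have "p - s *\<^sub>R x \<in> ?L2" by (simp only: span_lcs)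
    then show ?thesis by (intro exI[of _ s] exI[of _ "p - s *\<^sub>R x"]) simp
  qed
  have m3: "B u v \<in> ?L3" if "v \<in> ?L2" for u v using lcs_mem[of "Suc (Suc 0)" v u] that by simp
  have s3: "subspace ?L3" by (rule lcs_subspace)
  have "?L2 \<subseteq> ?L3"
  proof -
    have "{B p q |p q. q \<in> lcs B (Suc 0)} \<subseteq> ?L3"
    proof clarify
      fix p q
      obtain s p' where p: "p' \<in> ?L2" "p = s *\<^sub>R x + p'" using dec by blast
      obtain t q' where q: "q' \<in> ?L2" "q = t *\<^sub>R x + q'" using dec by blast
      have "B p q = s *\<^sub>R B x q' + t *\<^sub>R (- B x p') + B p' q'"
        using B_anti[of p' x] by (simp add: p q algebra_simps)
      also have "\<dots> \<in> ?L3"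
        using m3 p q s3 by (intro subspace_add subspace_mul subspace_neg) auto
      finally show "B p q \<in> ?L3" .
    qed
    then have "span {B p q |p q. q \<in> lcs B (Suc 0)} \<subseteq> ?L3" by (rule span_minimal[OF _ s3])
    then show ?thesis by (simp only: lcsSS)
  qed
  then show False using lcs_strict[of "Suc 0"] ne by auto
qed

end



context S5 begin

lemma indep_basis:
  assumes r12: "B X1 X2 = Y" and r13: "B X1 X3 = Z" and ind: "ind2 Y Z"
    and cY: "\<And>x. B x Y = 0" and cZ: "\<And>x. B x Z = 0"
    and S: "x1 *\<^sub>R X1 + x2 *\<^sub>R X2 + x3 *\<^sub>R X3 + x4 *\<^sub>R Y + x5 *\<^sub>R Z = 0"
  shows "x1 = 0 \<and> x2 = 0 \<and> x3 = 0 \<and> x4 = 0 \<and> x5 = 0"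
proof -
  have "B X1 (x1 *\<^sub>R X1 + x2 *\<^sub>R X2 + x3 *\<^sub>R X3 + x4 *\<^sub>R Y + x5 *\<^sub>R Z) = 0" by (simp only: S) simp
  then have "x2 *\<^sub>R Y + x3 *\<^sub>R Z = 0" by (simp add: r12 r13 cY cZ)
  then have 23: "x2 = 0" "x3 = 0" using ind unfolding ind2_def by blast+
  have "B X2 (x1 *\<^sub>R X1 + x2 *\<^sub>R X2 + x3 *\<^sub>R X3 + x4 *\<^sub>R Y + x5 *\<^sub>R Z) = 0" by (simp only: S) simp
  then have "x1 *\<^sub>R B X2 X1 = 0" by (simp add: 23 cY cZ)
  then have "x1 *\<^sub>R Y = 0" using B_anti[of X1 X2] r12 by simp
  then have 1: "x1 = 0" using ind2_nz[OF ind] by simp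
  have "x4 *\<^sub>R Y + x5 *\<^sub>R Z = 0" using S 1 23 by simp
  then have "x4 = 0" "x5 = 0" using ind unfolding ind2_def by blast+
  then show ?thesis using 1 23 by simp
qed

lemma g52_iso:
  assumes r12: "B X1 X2 = Y" and r13: "B X1 X3 = Z" and r23: "B X2 X3 = 0" and ind: "ind2 Y Z"
    and cY: "\<And>x. B x Y = 0" and cZ: "\<And>x. B x Z = 0"
  shows "\<exists>f. lie_iso B g52 f"
proof -
  have cY': "B Y x = 0" for x using B_anti[of x Y] cY by simp
  have cZ': "B Z x = 0" for x using B_anti[of x Z] cZ by simp
  have r21: "B X2 X1 = - Y" using B_anti[of X1 X2] r12 by simp
  have r31: "B X3 X1 = - Z" using B_anti[of X1 X3] r13 by simp
  have r32: "B X3 X2 = 0" using B_anti[of X2 X3] r23 by simp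
  define h :: "real^5 \<Rightarrow> 'a" where
    "h v = v$0 *\<^sub>R X1 + v$1 *\<^sub>R X2 + v$2 *\<^sub>R X3 + v$3 *\<^sub>R Y + v$4 *\<^sub>R Z" for v
  have lin: "linear h"
    by (rule linearI) (simp_all add: h_def algebra_simps)
  have inj: "inj h"
  proof (subst linear_injective_0[OF lin], intro allI impI)
    fix v assume "h v = 0"
    then have "v$0 = 0 \<and> v$1 = 0 \<and> v$2 = 0 \<and> v$3 = 0 \<and> v$4 = 0"
      unfolding h_def by (rule indep_basis[OF r12 r13 ind cY cZ])
    then show "v = 0" unfolding vec_eq_iff using exhaust_5 by (metis zero_index)
  qed
  have hom: "h (g52 v w) = B (h v) (h w)" for v w
    by (simp add: h_def g52_def axis_def r12 r13 r23 r21 r31 r32 cY cZ cY' cZ' algebra_simps)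
  obtain f where f: "linear f" "\<And>x. f (h x) = x" "\<And>x. h (f x) = x"
    using linear_injective_isomorphism[OF lin inj] dim5 by auto
  have "bij f" by (metis bijI injI surjI f(2) f(3))
  moreover have "f (B x y) = g52 (f x) (f y)" for x y
  proof -
    have "B x y = B (h (f x)) (h (f y))" using f(3) by simp
    also have "\<dots> = h (g52 (f x) (f y))" by (simp add: hom)
    finally show ?thesis using f(2) by simp
  qed
  ultimately show ?thesis unfolding lie_iso_def using f(1) by blast
qed


lemma abelian_case:
  assumes z2: "lcs B (Suc (Suc 0)) = {0}"
  shows "\<exists>f. lie_iso B abelian5 f"
proof -
  have B0: "B x y = 0" for x y
    using lcs_mem[of "Suc 0" y x] z2 by (simp add: lcs1)
  have "dim (UNIV::'a set) = dim (UNIV :: (real^5) set)" using dim5 by simp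
  then obtain f :: "'a \<Rightarrow> real^5" where f: "linear f" "f ` UNIV = UNIV" "inj_on f UNIV"
    using subspace_isomorphism[OF subspace_UNIV subspace_UNIV] by blast
  have "bij f" using f by (auto simp: bij_def)
  moreover have "f (B x y) = abelian5 (f x) (f y)" for x y
    using linear_0[OF f(1)] by (simp add: B0 abelian5_def)
  ultimately show ?thesis unfolding lie_iso_def using f(1) by blast
qed

lemma twostep_case:
  assumes z3: "lcs B (Suc (Suc (Suc 0))) = {0}" and nz2: "lcs B (Suc (Suc 0)) \<noteq> {0}"
  shows "\<exists>f. lie_iso B g52 f"
proof -
  let ?L2 = "lcs B (Suc (Suc 0))"
  have m2: "B p q \<in> ?L2" for p q using lcs_mem[of "Suc 0" q p] by (simp add: lcs1)
  have cen: "B x v = 0" if "v \<in> ?L2" for x v using lcs_mem[of "Suc (Suc 0)" v x] that z3 by simp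
  have c1[simp]: "B x (B p q) = 0" for x p q using cen m2 by blast
  have c2[simp]: "B (B p q) x = 0" for x p q using B_anti[of x "B p q"] c1 by simp
  have L2eq: "?L2 = span {B x y |x y. y \<in> lcs B (Suc 0)}" by (rule lcsSS)
  have ex: "\<exists>a b c d. ind2 (B a b) (B c d)"
  proof (rule ccontr)
    assume nex: "\<not> ?thesis"
    have "\<exists>a b. B a b \<noteq> 0"
    proof (rule ccontr)
      assume "\<not> ?thesis"
      then have "{B x y |x y. y \<in> lcs B (Suc 0)} \<subseteq> {0}" by auto
      then have "?L2 \<subseteq> span {0}" unfolding L2eq by (rule span_mono)
      then show False using nz2 subspace_0[OF lcs_subspace, of "Suc (Suc 0)"] by auto
    qed
    then obtain a b where y: "B a b \<noteq> 0" by blast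
    have "{B x y |x y. y \<in> lcs B (Suc 0)} \<subseteq> span {B a b, B a b}"
    proof clarify
      fix c d
      obtain l where "B c d = l *\<^sub>R B a b" using not_ind2[of "B a b" "B c d"] nex y by blast
      then show "B c d \<in> span {B a b, B a b}" by (simp add: span_clauses)
    qed
    then have "?L2 \<subseteq> span {B a b, B a b}" unfolding L2eq by (rule span_minimal[OF _ subspace_span])
    then have "B a b = 0"
      by (intro adm_gen[of "Suc 0" "B a b" "B a b"]) (use z3 m2 in \<open>simp_all add: gs\<close>)
    then show False using y by simp
  qed
  then obtain a b c d where ind: "ind2 (B a b) (B c d)" by blast
  show ?thesis
  proof (cases "\<exists>x u v. ind2 (B x u) (B x v)")
    case True
    then obtain a b c where ind: "ind2 (B a b) (B a c)" by blast
    have "\<exists>x1 x2 x3 x4 x5. B b c = x1 *\<^sub>R a + x2 *\<^sub>R b + x3 *\<^sub>R c + x4 *\<^sub>R B a b + x5 *\<^sub>R B a c"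
      by (rule five_span[OF dim5]) (rule indep_basis[of a b _ c], simp_all add: ind)
    then obtain p q r s t where bc: "B b c = p *\<^sub>R a + q *\<^sub>R b + r *\<^sub>R c + s *\<^sub>R B a b + t *\<^sub>R B a c"
      by blast
    have "B a (B b c) = q *\<^sub>R B a b + r *\<^sub>R B a c" by (subst bc) simp
    then have "q *\<^sub>R B a b + r *\<^sub>R B a c = 0" by simp
    then have qr: "q = 0" "r = 0" using ind unfolding ind2_def by blast+
    have "B b (B b c) = p *\<^sub>R B b a" by (subst bc) (simp add: qr)
    then have "p *\<^sub>R B a b = 0" using B_anti[of a b] by simp
    then have p: "p = 0" using ind2_nz[OF ind] by simp
    have bc': "B b c = s *\<^sub>R B a b + t *\<^sub>R B a c" using bc p qr by simp
    show ?thesis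
    proof (rule g52_iso[of a "b - t *\<^sub>R a" "B a b" "c + s *\<^sub>R a" "B a c"])
      show "B (b - t *\<^sub>R a) (c + s *\<^sub>R a) = 0"
        using B_anti[of a b] by (simp add: bc' algebra_simps)
    qed (simp_all add: ind)
  next
    case False
    then have nind: "\<And>x u v. \<not> ind2 (B x u) (B x v)" by blast
    have yn: "B a b \<noteq> 0" and wn: "B c d \<noteq> 0" using ind2_nz[OF ind] by auto
    have mult: "\<exists>l. B x v = l *\<^sub>R B x u" if "B x u \<noteq> 0" for x u v
      using not_ind2[OF nind that] .
    have ac: "B a c = 0"
    proof -
      obtain l where l: "B a c = l *\<^sub>R B a b" using mult yn by blast
      obtain m where m: "B c a = m *\<^sub>R B c d" using mult wn by blast
      have "B a c = (- m) *\<^sub>R B c d" using m B_anti[of a c] by simp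
      then show ?thesis using ind2_both[OF ind l] by blast
    qed
    have ad: "B a d = 0"
    proof -
      have dc: "B d c \<noteq> 0" using wn B_anti[of c d] by simp
      obtain l where l: "B a d = l *\<^sub>R B a b" using mult yn by blast
      obtain m where m: "B d a = m *\<^sub>R B d c" using mult dc by blast
      have "B a d = m *\<^sub>R B c d" using m B_anti[of a d] B_anti[of c d] by simp
      then show ?thesis using ind2_both[OF ind l] by blast
    qed
    have bc: "B b c = 0"
    proof -
      have ba: "B b a \<noteq> 0" using yn B_anti[of a b] by simp
      obtain l where l: "B b c = l *\<^sub>R B b a" using mult ba by blast
      obtain m where m: "B c b = m *\<^sub>R B c d" using mult wn by blast
      have l': "B b c = (- l) *\<^sub>R B a b" using l B_anti[of a b] by simp
      have "B b c = (- m) *\<^sub>R B c d" using m B_anti[of b c] by simp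
      then show ?thesis using ind2_both[OF ind l'] by blast
    qed
    have bd: "B b d = 0"
    proof -
      have ba: "B b a \<noteq> 0" using yn B_anti[of a b] by simp
      have dc: "B d c \<noteq> 0" using wn B_anti[of c d] by simp
      obtain l where l: "B b d = l *\<^sub>R B b a" using mult ba by blast
      obtain m where m: "B d b = m *\<^sub>R B d c" using mult dc by blast
      have l': "B b d = (- l) *\<^sub>R B a b" using l B_anti[of a b] by simp
      have "B b d = m *\<^sub>R B c d" using m B_anti[of b d] B_anti[of c d] by simp
      then show ?thesis using ind2_both[OF ind l'] by blast
    qed
    have ba: "B b a = - B a b" by (rule B_anti)
    have ca: "B c a = 0" using ac B_anti[of a c] by simp
    have cb: "B c b = 0" using bc B_anti[of b c] by simp
    have da: "B d a = 0" using ad B_anti[of a d] by simp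
    have db: "B d b = 0" using bd B_anti[of b d] by simp
    have dc: "B d c = - B c d" by (rule B_anti)
    show ?thesis
    proof (rule FalseE, rule six_False[OF dim5, of a b c d "B a b" "B c d"])
      fix x1 x2 x3 x4 x5 x6
      assume S: "x1 *\<^sub>R a + x2 *\<^sub>R b + x3 *\<^sub>R c + x4 *\<^sub>R d + x5 *\<^sub>R B a b + x6 *\<^sub>R B c d = 0"
      let ?S = "x1 *\<^sub>R a + x2 *\<^sub>R b + x3 *\<^sub>R c + x4 *\<^sub>R d + x5 *\<^sub>R B a b + x6 *\<^sub>R B c d"
      have "B a ?S = 0" "B b ?S = 0" "B c ?S = 0" "B d ?S = 0" by (simp_all only: S) simp_all
      then have "x2 *\<^sub>R B a b = 0" "x1 *\<^sub>R B a b = 0" "x4 *\<^sub>R B c d = 0" "x3 *\<^sub>R B c d = 0"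
        by (simp_all add: ac ad bc bd ba ca cb da db dc)
      then have 1: "x1 = 0" "x2 = 0" "x3 = 0" "x4 = 0" using yn wn by simp_all
      then have "x5 *\<^sub>R B a b + x6 *\<^sub>R B c d = 0" using S by simp
      then have "x5 = 0" "x6 = 0" using ind unfolding ind2_def by blast+
      then show "x1 = 0 \<and> x2 = 0 \<and> x3 = 0 \<and> x4 = 0 \<and> x5 = 0 \<and> x6 = 0" using 1 by simp
    qed
  qed
qed


lemma threestep_case:
  assumes z4: "lcs B (Suc (Suc (Suc (Suc 0)))) = {0}"
    and d2: "dim (lcs B (Suc (Suc 0))) = 3" and d3: "dim (lcs B (Suc (Suc (Suc 0)))) = 2"
  shows False
proof -
  let ?L2 = "lcs B (Suc (Suc 0))" and ?L3 = "lcs B (Suc (Suc (Suc 0)))"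
  have s2: "subspace ?L2" and s3: "subspace ?L3" by (rule lcs_subspace)+
  have sp2: "span ?L2 = ?L2" and sp3: "span ?L3 = ?L3" by (rule span_lcs)+
  have m2: "B p q \<in> ?L2" for p q using lcs_mem[of "Suc 0" q p] by (simp add: lcs1)
  have m3: "B x v \<in> ?L3" if "v \<in> ?L2" for x v using lcs_mem[of "Suc (Suc 0)" v x] that by simp
  have c3: "B x v = 0" if "v \<in> ?L3" for x v using lcs_mem[of "Suc (Suc (Suc 0))" v x] that z4 by simp
  have c3': "B v x = 0" if "v \<in> ?L3" for x v using c3[OF that, of x] B_anti[of x v] by simp
  have L32: "?L3 \<subseteq> ?L2" by (rule lcs_mono)
  have "\<exists>a b. B a b \<notin> ?L3"
  proof (rule ccontr)
    assume "\<not> ?thesis"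
    then have "{B x y |x y. y \<in> lcs B (Suc 0)} \<subseteq> ?L3" by auto
    then have "span {B x y |x y. y \<in> lcs B (Suc 0)} \<subseteq> ?L3" by (rule span_minimal[OF _ s3])
    then have "?L2 \<subseteq> ?L3" by (simp only: lcsSS)
    then have "dim ?L2 \<le> dim ?L3" by (rule dim_subset)
    then show False using d2 d3 by simp
  qed
  then obtain a b where wn: "B a b \<notin> ?L3" by blast
  define w where "w = B a b"
  define z1 where "z1 = B a w"
  define z2 where "z2 = B b w"
  have w2: "w \<in> ?L2" unfolding w_def by (rule m2)
  have w3: "w \<notin> ?L3" using wn unfolding w_def .
  have z13: "z1 \<in> ?L3" unfolding z1_def by (rule m3[OF w2])
  have z23: "z2 \<in> ?L3" unfolding z2_def by (rule m3[OF w2])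
  have a2: "a \<notin> ?L2"
  proof
    assume "a \<in> ?L2"
    then have "B b a \<in> ?L3" by (rule m3)
    then have "- B b a \<in> ?L3" by (rule subspace_neg[OF s3])
    then show False using w3 B_anti[of a b] unfolding w_def by simp
  qed
  have b2: "b \<notin> span (insert a ?L2)"
  proof
    assume "b \<in> span (insert a ?L2)"
    then obtain k where "b - k *\<^sub>R a \<in> span ?L2" using span_breakdown_eq by blast
    then have u: "b - k *\<^sub>R a \<in> ?L2" by (simp only: sp2)
    have "B a (b - k *\<^sub>R a) \<in> ?L3" by (rule m3[OF u])
    then show False using w3 unfolding w_def by simp
  qed
  have "dim (insert a ?L2) = 4" using dim_insert[of a ?L2] a2 d2 by (simp add: sp2)
  then have "dim (insert b (insert a ?L2)) = 5" using dim_insert[of b "insert a ?L2"] b2 by simp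
  then have spU: "span (insert b (insert a ?L2)) = UNIV" using dim_eq_full dim5 by metis
  have decx: "\<exists>s t v. v \<in> ?L2 \<and> x = s *\<^sub>R a + t *\<^sub>R b + v" for x
  proof -
    have "x \<in> span (insert b (insert a ?L2))" using spU by simp
    then obtain t where "x - t *\<^sub>R b \<in> span (insert a ?L2)" using span_breakdown_eq by blast
    then obtain s where "x - t *\<^sub>R b - s *\<^sub>R a \<in> span ?L2" using span_breakdown_eq by blast
    then have "x - t *\<^sub>R b - s *\<^sub>R a \<in> ?L2" by (simp only: sp2)
    then show ?thesis by (intro exI[of _ s] exI[of _ t] exI[of _ "x - t *\<^sub>R b - s *\<^sub>R a"]) simp
  qed
  have "span (insert w ?L3) = span ?L2"
  proof (rule dim_eq_span)
    show "insert w ?L3 \<subseteq> ?L2" using w2 L32 by blast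
    show "dim ?L2 \<le> dim (insert w ?L3)" using dim_insert[of w ?L3] w3 d2 d3 by (simp add: sp3)
  qed
  then have spw: "span (insert w ?L3) = ?L2" by (simp only: sp2)
  have decv: "\<exists>r u. u \<in> ?L3 \<and> v = r *\<^sub>R w + u" if "v \<in> ?L2" for v
  proof -
    have "v \<in> span (insert w ?L3)" using that spw by simp
    then obtain r where "v - r *\<^sub>R w \<in> span ?L3" using span_breakdown_eq by blast
    then have "v - r *\<^sub>R w \<in> ?L3" by (simp only: sp3)
    then show ?thesis by (intro exI[of _ r] exI[of _ "v - r *\<^sub>R w"]) simp
  qed
  have Bxw: "B x w \<in> span {z1, z2}" for x
  proof -
    obtain s t v where v: "v \<in> ?L2" "x = s *\<^sub>R a + t *\<^sub>R b + v" using decx by blast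
    obtain r u where u: "u \<in> ?L3" "v = r *\<^sub>R w + u" using decv[OF v(1)] by blast
    have "B x w = s *\<^sub>R z1 + t *\<^sub>R z2" using c3'[OF u(1), of w]
      by (simp add: v(2) u(2) z1_def z2_def)
    also have "\<dots> \<in> span {z1, z2}" by (intro span_add span_mul span_base) auto
    finally show ?thesis .
  qed
  have L3sub: "?L3 \<subseteq> span {z1, z2}"
  proof -
    have "{B x y |x y. y \<in> ?L2} \<subseteq> span {z1, z2}"
    proof clarify
      fix x y assume y: "y \<in> ?L2"
      obtain r u where u: "u \<in> ?L3" "y = r *\<^sub>R w + u" using decv[OF y] by blast
      have "B x y = r *\<^sub>R B x w" using c3[OF u(1), of x] by (simp add: u(2))
      also have "\<dots> \<in> span {z1, z2}" by (intro span_mul Bxw)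
      finally show "B x y \<in> span {z1, z2}" .
    qed
    then have "span {B x y |x y. y \<in> ?L2} \<subseteq> span {z1, z2}"
      by (rule span_minimal[OF _ subspace_span])
    then show ?thesis by (simp only: lcsSS)
  qed
  have az1: "B a z1 = 0" "B b z1 = 0" "B w z1 = 0" "B z2 z1 = 0" using c3[OF z13] by auto
  have az2: "B a z2 = 0" "B b z2 = 0" "B w z2 = 0" "B z1 z2 = 0" using c3[OF z23] by auto
  have abw: "B a b = w" "B a w = z1" "B b w = z2" by (simp_all add: w_def z1_def z2_def)
  have gw: "g0 w z1 z2 = 0"
    using cocy[of a b z1 z2] unfolding d3_def by (simp add: az1 az2 abw gs)
  have ga0: "g0 z2 a z1 = 0"
    using cocy[of a b w z1] unfolding d3_def by (simp add: az1 az2 abw gs)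
  have ga: "g0 a z1 z2 = 0" using ga0 g_swap12[of a z2 z1] g_swap23[of a z1 z2] by simp
  have gb0: "g0 z1 b z2 = 0"
    using cocy[of a b w z2] unfolding d3_def by (simp add: az1 az2 abw gs)
  have gb: "g0 b z1 z2 = 0" using gb0 g_swap12[of b z1 z2] by simp
  have gz: "g0 L z1 z2 = 0" for L
  proof -
    obtain s t v where v: "v \<in> ?L2" "L = s *\<^sub>R a + t *\<^sub>R b + v" using decx by blast
    obtain r u where u: "u \<in> ?L3" "v = r *\<^sub>R w + u" using decv[OF v(1)] by blast
    obtain p q where pq: "u = p *\<^sub>R z1 + q *\<^sub>R z2" using in_span2 L3sub u(1) by blast
    show ?thesis by (simp add: v(2) u(2) pq gs ga gb gw)
  qed
  have z1n: "z1 \<noteq> 0"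
  proof
    assume "z1 = 0"
    then have "?L3 \<subseteq> span {z2}" using L3sub by simp
    then have "dim ?L3 \<le> card {z2}" by (intro dim_le_card) auto
    then show False using d3 by simp
  qed
  have "z1 = 0" by (rule adm_gen[of "Suc (Suc 0)" z1 z2]) (use z4 z13 L3sub gz in auto)
  then show False using z1n by simp
qed


lemma main: "(\<exists>f. lie_iso B abelian5 f) \<or> (\<exists>f. lie_iso B g52 f)"
proof -
  let ?d = "\<lambda>k. dim (lcs B k)"
  have d1: "?d (Suc 0) = 5" by (simp add: lcs1 dim5)
  show ?thesis
  proof (cases "lcs B (Suc (Suc 0)) = {0}")
    case True then show ?thesis using abelian_case by blast
  next
    case nz2: False
    have U: "lcs B (Suc 0) \<noteq> {0}"
    proof
      assume "lcs B (Suc 0) = {0}"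
      then have "dim (lcs B (Suc 0)) = 0" by (simp add: dim_eq_0)
      with d1 show False by simp
    qed
    have "?d (Suc (Suc 0)) < 5" using dim_strict[OF U] d1 by simp
    moreover have "?d (Suc (Suc 0)) \<noteq> 4" by (rule codim[OF nz2])
    ultimately have d2: "?d (Suc (Suc 0)) \<le> 3" by simp
    show ?thesis
    proof (cases "lcs B (Suc (Suc (Suc 0))) = {0}")
      case True then show ?thesis using twostep_case nz2 by blast
    next
      case nz3: False
      have d3: "?d (Suc (Suc (Suc 0))) < ?d (Suc (Suc 0))" by (rule dim_strict[OF nz2])
      show ?thesis
      proof (cases "lcs B (Suc (Suc (Suc (Suc 0)))) = {0}")
        case True
        have "2 \<le> ?d (Suc (Suc (Suc 0)))" by (rule dim_ge2[OF True nz3])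
        then have "?d (Suc (Suc (Suc 0))) = 2" "?d (Suc (Suc 0)) = 3" using d2 d3 by auto
        then show ?thesis using threestep_case[OF True] by blast
      next
        case nz4: False
        have d4: "?d (Suc (Suc (Suc (Suc 0)))) < ?d (Suc (Suc (Suc 0)))" by (rule dim_strict[OF nz3])
        show ?thesis
        proof (cases "lcs B (Suc (Suc (Suc (Suc (Suc 0))))) = {0}")
          case True
          have "2 \<le> ?d (Suc (Suc (Suc (Suc 0))))" by (rule dim_ge2[OF True nz4])
          then show ?thesis using d2 d3 d4 by simp
        next
          case nz5: False
          have d5: "?d (Suc (Suc (Suc (Suc (Suc 0))))) < ?d (Suc (Suc (Suc (Suc 0))))"
            by (rule dim_strict[OF nz4])
          have "1 \<le> ?d (Suc (Suc (Suc (Suc (Suc 0)))))" by (rule dim_pos[OF lcs_subspace nz5])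
          then show ?thesis using d2 d3 d4 d5 by simp
        qed
      qed
    qed
  qed
qed

end

theorem proposition4:
  fixes B :: "'a::euclidean_space \<Rightarrow> 'a \<Rightarrow> 'a"
  assumes "DIM('a) = 5"
    and "lie_algebra B"
    and "nilpotent_lie B"
    and "HQ0 B \<noteq> {}"
  shows "(\<exists>f. lie_iso B abelian5 f) \<or> (\<exists>f. lie_iso B g52 f)"
proof -
  obtain c where c: "c \<in> HQ0 B" using assms(4) by blast
  then obtain g0 where g0: "c = qclass B g0" "cocycle3_on B UNIV g0"
    unfolding HQ0_def HQ_def by blast
  obtain g where g: "c = qclass B g" "admissible_rep B g"
    using c unfolding HQ0_def by blast
  have alt0: "alt2_on UNIV (\<lambda>_ _. 0::real)" unfolding alt2_on_def lin_on_def by simp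
  have "g0 \<in> qclass B g0" unfolding qclass_def
    by (rule CollectI, rule exI[of _ "\<lambda>_ _. 0"]) (simp add: alt0 d2_def)
  then have "g0 \<in> qclass B g" using g0(1) g(1) by simp
  then obtain s where s: "alt2_on UNIV s" "g0 = (\<lambda>x y z. g x y z + d2 B s x y z)"
    unfolding qclass_def by blast
  have s0: "s 0 y = 0" for y
  proof -
    have "lin_on UNIV (\<lambda>x. s x y)" using s(1) unfolding alt2_on_def by blast
    from lin_on_scale[OF this, of 0 0] show ?thesis by simp
  qed
  have rel: "g L z X = g0 L z X" if "z \<in> centre B" "X \<in> centre B" for L z X
    using that by (simp add: s(2) d2_def centre_def s0)
  interpret S5 B g g0
    by unfold_locales (use assms g0 g rel in auto)
  show ?thesis by (rule main)
qed


end
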